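(* For any $F\in[0,1)$, any $\alpha\in(0,1]$, any $L_0>0$, and any target transport distance $W>0$, there exist a metric space $(\mathcal{X},d)$, a scoring function $s$ that is $(\alpha,L_0)$-Hölder continuous on $(\mathcal{X},d)$ (i.e. $|s(x)-s(y)|\le L_0 d(x,y)^\alpha$), a base distribution $\mathbb{P}_0$ and a skill-augmented distribution $\mathbb{P}_\pi$ on $\mathcal{X}$ such that: (i) the metric freedom of $s$ under $\mathbb{P}_0$ equals $F$; (ii) $\tilde{\mathcal{W}}_1(\mathbb{P}_\pi,\mathbb{P}_0)=W$; (iii) $\mathrm{Lift}(\pi)\ge\tfrac12 L_0(1-F)\,W$.
   Context: The metric freedom of $s$ under $\mathbb{P}_0$ is $1-r$, where $r$ is the Spearman rank correlation between $U=\tilde d(X,X')$ and $V=|s(X)-s(X')|$ for $X,X'$ i.i.d. $\sim\mathbb{P}_0$, with $\tilde d(x,y)=d(x,y)^\alpha$. $\tilde{\mathcal{W}}_1$ is the Wasserstein-1 distance with respect to $\tilde d$. $\mathrm{Lift}(\pi)=\mathbb{E}_{\mathbb{P}_\pi}[s]-\mathbb{E}_{\mathbb{P}_0}[s]$. *)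

theory Defs
  imports "HOL-Probability.Probability"
begin

definition metric_on :: "'a set \<Rightarrow> ('a \<Rightarrow> 'a \<Rightarrow> real) \<Rightarrow> bool" where
  "metric_on S d \<longleftrightarrow>
     (\<forall>x\<in>S. \<forall>y\<in>S. 0 \<le> d x y \<and> (d x y = 0 \<longleftrightarrow> x = y) \<and> d x y = d y x) \<and>
     (\<forall>x\<in>S. \<forall>y\<in>S. \<forall>z\<in>S. d x z \<le> d x y + d y z)"

definition holder_on :: "'a set \<Rightarrow> ('a \<Rightarrow> 'a \<Rightarrow> real) \<Rightarrow> real \<Rightarrow> real \<Rightarrow> ('a \<Rightarrow> real) \<Rightarrow> bool" where
  "holder_on S d \<alpha> L s \<longleftrightarrow> (\<forall>x\<in>S. \<forall>y\<in>S. \<bar>s x - s y\<bar> \<le> L * d x y powr \<alpha>)"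

text \<open>Mid-rank (population rank) transform of a real random variable U on N:
  P(U < u) + P(U = u)/2; equals the distribution function when U has no atoms.\<close>
definition midrank :: "'b measure \<Rightarrow> ('b \<Rightarrow> real) \<Rightarrow> real \<Rightarrow> real" where
  "midrank N U u = measure N {\<omega>\<in>space N. U \<omega> < u} + measure N {\<omega>\<in>space N. U \<omega> = u} / 2"

definition pearson :: "'b measure \<Rightarrow> ('b \<Rightarrow> real) \<Rightarrow> ('b \<Rightarrow> real) \<Rightarrow> real" where
  "pearson N A B =
     (let EA = integral\<^sup>L N A; EB = integral\<^sup>L N B;
          cov = integral\<^sup>L N (\<lambda>\<omega>. (A \<omega> - EA) * (B \<omega> - EB));
          vA = integral\<^sup>L N (\<lambda>\<omega>. (A \<omega> - EA)\<^sup>2);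
          vB = integral\<^sup>L N (\<lambda>\<omega>. (B \<omega> - EB)\<^sup>2)
      in cov / sqrt (vA * vB))"

definition spearman :: "'b measure \<Rightarrow> ('b \<Rightarrow> real) \<Rightarrow> ('b \<Rightarrow> real) \<Rightarrow> real" where
  "spearman N U V = pearson N (\<lambda>\<omega>. midrank N U (U \<omega>)) (\<lambda>\<omega>. midrank N V (V \<omega>))"

definition metric_freedom :: "'a measure \<Rightarrow> ('a \<Rightarrow> 'a \<Rightarrow> real) \<Rightarrow> real \<Rightarrow> ('a \<Rightarrow> real) \<Rightarrow> real" where
  "metric_freedom P0 d \<alpha> s =
     1 - spearman (P0 \<Otimes>\<^sub>M P0) (\<lambda>(x, y). d x y powr \<alpha>) (\<lambda>(x, y). \<bar>s x - s y\<bar>)"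

definition couplings :: "'a measure \<Rightarrow> 'a measure \<Rightarrow> ('a \<times> 'a) measure set" where
  "couplings P Q = {C. sets C = sets (P \<Otimes>\<^sub>M Q) \<and> prob_space C \<and>
                      distr C P fst = P \<and> distr C Q snd = Q}"

definition wasserstein1 :: "('a \<Rightarrow> 'a \<Rightarrow> real) \<Rightarrow> real \<Rightarrow> 'a measure \<Rightarrow> 'a measure \<Rightarrow> ennreal" where
  "wasserstein1 d \<alpha> P Q =
     (INF C\<in>couplings P Q. \<integral>\<^sup>+ z. ennreal (d (fst z) (snd z) powr \<alpha>) \<partial>C)"

definition lift :: "'a measure \<Rightarrow> 'a measure \<Rightarrow> ('a \<Rightarrow> real) \<Rightarrow> real" where
  "lift Ppi P0 s = integral\<^sup>L Ppi s - integral\<^sup>L P0 s"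

end

theory Submission
  imports Defs
begin

lemma split3:
  fixes q :: "'a \<Rightarrow> real"
  assumes A: "finite A" and GE: "A \<inter> G \<subseteq> E"
  shows "(\<Sum>a\<in>A. q a * \<phi> (a\<in>E) (a\<in>G)) =
     (\<Sum>a\<in>A\<inter>G. q a) * \<phi> True True + ((\<Sum>a\<in>A\<inter>E. q a) - (\<Sum>a\<in>A\<inter>G. q a)) * \<phi> True False
     + ((\<Sum>a\<in>A. q a) - (\<Sum>a\<in>A\<inter>E. q a)) * \<phi> False False"
proof -
  have "(\<Sum>a\<in>A. q a * \<phi> (a\<in>E) (a\<in>G)) = (\<Sum>a\<in>A. (if a\<in>G then q a else 0) * \<phi> True True
      + ((if a\<in>E then q a else 0) - (if a\<in>G then q a else 0)) * \<phi> True False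
      + (q a - (if a\<in>E then q a else 0)) * \<phi> False False)"
    using GE by (intro sum.cong) auto
  also have "\<dots> = (\<Sum>a\<in>A. (if a\<in>G then q a else 0)) * \<phi> True True
      + ((\<Sum>a\<in>A. (if a\<in>E then q a else 0)) - (\<Sum>a\<in>A. (if a\<in>G then q a else 0))) * \<phi> True False
      + ((\<Sum>a\<in>A. q a) - (\<Sum>a\<in>A. (if a\<in>E then q a else 0))) * \<phi> False False"
    by (simp add: sum.distrib sum_distrib_right sum_subtractf left_diff_distrib)
  finally show ?thesis by (simp add: sum.inter_restrict[OF A])
qed

lemma midrank_bin:
  fixes q :: "'a \<Rightarrow> real"
  assumes A: "finite A" and q: "\<And>x. 0 \<le> q x" and s1: "(\<Sum>a\<in>A. q a) = 1" and h: "0 < h"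
  shows "midrank (point_measure A (\<lambda>a. ennreal (q a))) (\<lambda>\<omega>. if \<omega>\<in>E then h else 0) (if \<omega>\<in>E then h else 0)
       = (if \<omega>\<in>E then 1 - (\<Sum>a\<in>A\<inter>E. q a)/2 else (1 - (\<Sum>a\<in>A\<inter>E. q a))/2)"
proof -
  have m: "measure (point_measure A (\<lambda>a. ennreal (q a))) X = (\<Sum>a\<in>X. q a)" if "X \<subseteq> A" for X
    using measure_point_measure_finite_if[OF A, of q X] q that by simp
  have d: "(\<Sum>a\<in>A-E. q a) = 1 - (\<Sum>a\<in>A\<inter>E. q a)"
    using sum.Int_Diff[OF A, of q E] s1 by simp
  show ?thesis
  proof (cases "\<omega> \<in> E")
    case True
    have e1: "{x \<in> space (point_measure A (\<lambda>a. ennreal (q a))). (if x\<in>E then h else 0) < h} = A - E"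
      using h by (auto simp: space_point_measure)
    have e2: "{x \<in> space (point_measure A (\<lambda>a. ennreal (q a))). (if x\<in>E then h else 0) = h} = A \<inter> E"
      using h by (auto simp: space_point_measure)
    show ?thesis using True unfolding midrank_def
      by (simp add: e1 e2 m d)
  next
    case False
    have e1: "{x \<in> space (point_measure A (\<lambda>a. ennreal (q a))). (if x\<in>E then h else 0) < 0} = {}"
      using h by (auto simp: space_point_measure)
    have e2: "{x \<in> space (point_measure A (\<lambda>a. ennreal (q a))). (if x\<in>E then h else 0) = 0} = A - E"
      using h by (auto simp: space_point_measure)
    show ?thesis using False unfolding midrank_def
      by (simp add: e1 e2 m d)
  qed
qed

lemma pearson_bin:
  fixes q :: "'a \<Rightarrow> real"
  assumes A: "finite A" and q: "\<And>x. 0 \<le> q x" and s1: "(\<Sum>a\<in>A. q a) = 1"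
    and GE: "A \<inter> G \<subseteq> E"
    and P: "P = (\<Sum>a\<in>A\<inter>E. q a)" and Q: "Q = (\<Sum>a\<in>A\<inter>G. q a)"
  shows "pearson (point_measure A (\<lambda>a. ennreal (q a)))
     (\<lambda>\<omega>. if \<omega>\<in>E then 1 - P/2 else (1 - P)/2) (\<lambda>\<omega>. if \<omega>\<in>G then 1 - Q/2 else (1 - Q)/2)
     = (1 - P) * Q / sqrt (P * (1 - P) * Q * (1 - Q))"
proof -
  let ?N = "point_measure A (\<lambda>a. ennreal (q a))"
  have I: "integral\<^sup>L ?N g = (\<Sum>a\<in>A. q a * g a)" for g :: "'a \<Rightarrow> real"
    using lebesgue_integral_point_measure_finite[OF A, of q g] q by simp
  note sp = split3[OF A GE, of q]
  have EA: "(\<Sum>a\<in>A. q a * (if a\<in>E then 1 - P/2 else (1 - P)/2)) = 1/2"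
    apply (subst sp[of "\<lambda>e g. if e then 1 - P/2 else (1 - P)/2"])
    apply (simp add: P[symmetric] Q[symmetric] s1)
    by (simp add: algebra_simps field_simps)
  have EB: "(\<Sum>a\<in>A. q a * (if a\<in>G then 1 - Q/2 else (1 - Q)/2)) = 1/2"
    apply (subst sp[of "\<lambda>e g. if g then 1 - Q/2 else (1 - Q)/2"])
    apply (simp add: P[symmetric] Q[symmetric] s1)
    by (simp add: algebra_simps field_simps)
  have C: "(\<Sum>a\<in>A. q a * (((if a\<in>E then 1 - P/2 else (1 - P)/2) - 1/2) *
        ((if a\<in>G then 1 - Q/2 else (1 - Q)/2) - 1/2))) = (1 - P) * Q / 4"
    apply (subst sp[of "\<lambda>e g. ((if e then 1 - P/2 else (1 - P)/2) - 1/2) * ((if g then 1 - Q/2 else (1 - Q)/2) - 1/2)"])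
    apply (simp add: P[symmetric] Q[symmetric] s1)
    by (simp add: algebra_simps field_simps)
  have VA: "(\<Sum>a\<in>A. q a * ((if a\<in>E then 1 - P/2 else (1 - P)/2) - 1/2)\<^sup>2) = P * (1 - P) / 4"
    apply (subst sp[of "\<lambda>e g. ((if e then 1 - P/2 else (1 - P)/2) - 1/2)\<^sup>2"])
    apply (simp add: P[symmetric] Q[symmetric] s1)
    by (simp add: algebra_simps power2_eq_square field_simps)
  have VB: "(\<Sum>a\<in>A. q a * ((if a\<in>G then 1 - Q/2 else (1 - Q)/2) - 1/2)\<^sup>2) = Q * (1 - Q) / 4"
    apply (subst sp[of "\<lambda>e g. ((if g then 1 - Q/2 else (1 - Q)/2) - 1/2)\<^sup>2"])
    apply (simp add: P[symmetric] Q[symmetric] s1)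
    by (simp add: algebra_simps power2_eq_square field_simps)
  have sq: "sqrt (P * (1 - P) / 4 * (Q * (1 - Q) / 4)) = sqrt (P * (1 - P) * Q * (1 - Q)) / 4"
  proof -
    have "P * (1 - P) / 4 * (Q * (1 - Q) / 4) = (P * (1 - P) * Q * (1 - Q)) / 16" by simp
    then show ?thesis by (simp add: real_sqrt_divide)
  qed
  show ?thesis
    unfolding pearson_def Let_def I EA EB C VA VB sq by simp
qed

lemma pm_prod:
  fixes f g :: "'a \<Rightarrow> real" and h :: "'b \<Rightarrow> real"
  assumes S: "finite S" and T: "finite T" and f: "\<And>x. 0 \<le> f x" and g: "\<And>x. 0 \<le> h x"
  shows "point_measure S (\<lambda>x. ennreal (f x)) \<Otimes>\<^sub>M point_measure T (\<lambda>x. ennreal (h x))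
       = point_measure (S \<times> T) (\<lambda>z. ennreal (f (fst z) * h (snd z)))"
proof -
  have s1: "sigma_finite_measure (count_space T)"
    using T by (rule sigma_finite_measure_count_space_finite)
  have "finite_measure (density (count_space T) (\<lambda>x. ennreal (h x)))"
    using T by (intro finite_measureI) (simp add: emeasure_density nn_integral_count_space_finite)
  then have s2: "sigma_finite_measure (density (count_space T) (\<lambda>x. ennreal (h x)))"
    by (simp add: finite_measure_def)
  show ?thesis
    unfolding point_measure_def
    apply (subst pair_measure_density[OF _ _ s1 s2])
      apply simp apply simp
    apply (subst pair_measure_count_space[OF S T])
    apply (rule arg_cong[where f="density _"])
    using f g by (auto simp: ennreal_mult fun_eq_iff)
qed

lemma params:
  fixes \<rho> :: real
  assumes r0: "0 < \<rho>" and r1: "\<rho> \<le> 1"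
  defines "t \<equiv> \<rho>\<^sup>2 / 16"
  defines "Q \<equiv> 2 * t * (1 - t)"
  defines "P \<equiv> Q / (Q + \<rho>\<^sup>2 * (1 - Q))"
  shows "0 < t" "t < 1" "0 < Q" "Q < 1" "0 < P" "P < 1" "Q \<le> P" "P - Q \<le> 1/8"
    "(1 - t)\<^sup>2 \<ge> 1/4" "(1 - P) * Q / sqrt (P * (1 - P) * Q * (1 - Q)) = \<rho>"
proof -
  have rr: "0 < \<rho>\<^sup>2" "\<rho>\<^sup>2 \<le> 1" using r0 r1 by (auto simp: power_le_one)
  show t0: "0 < t" using rr by (simp add: t_def)
  have t16: "t \<le> 1/16" using rr by (simp add: t_def)
  show t1: "t < 1" using t16 by simp
  show Q0: "0 < Q" using t0 t1 by (simp add: Q_def)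
  have Qt: "Q \<le> 2 * t" using t0 t1 by (simp add: Q_def mult_left_le)
  then show Q1: "Q < 1" using t16 by simp
  have den: "0 < Q + \<rho>\<^sup>2 * (1 - Q)" using Q0 Q1 rr by (simp add: add_pos_nonneg)
  show P0: "0 < P" using Q0 den by (simp add: P_def)
  have PQ: "P * (Q + \<rho>\<^sup>2 * (1 - Q)) = Q" using den by (simp add: P_def)
  have "Q < Q + \<rho>\<^sup>2 * (1 - Q)" using rr Q1 by simp
  then show P1: "P < 1" using Q0 den by (simp add: P_def)
  have "Q + \<rho>\<^sup>2 * (1 - Q) \<le> 1" using rr Q0 Q1
    by (smt (verit) mult_left_le_one_le)
  then have "Q \<le> P * 1" using PQ P0 by (metis mult_left_mono less_imp_le)
  then show "Q \<le> P" by simp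
  have k: "P - Q = P * (1 - Q) * (1 - \<rho>\<^sup>2)" using PQ by (simp add: algebra_simps)
  have e1: "P * (\<rho>\<^sup>2 * (1 - Q)) = Q - P * Q" using PQ by (simp add: algebra_simps)
  have "0 \<le> P * Q" using P0 Q0 by simp
  then have "P * (\<rho>\<^sup>2 * (1 - Q)) \<le> Q" using e1 by linarith
  then have a: "P * (1 - Q) * \<rho>\<^sup>2 \<le> 2 * t" using Qt by (simp add: algebra_simps)
  have "P * (1 - Q) * \<rho>\<^sup>2 \<le> (1/8) * \<rho>\<^sup>2" using a by (simp add: t_def)
  then have b: "P * (1 - Q) \<le> 1/8" using mult_le_cancel_right_pos[OF rr(1)] by blast
  have "P * (1 - Q) * (1 - \<rho>\<^sup>2) \<le> P * (1 - Q) * 1"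
    using P0 Q1 rr by (intro mult_left_mono) auto
  then show "P - Q \<le> 1/8" using k b by simp
  have "1/2 \<le> 1 - t" using t16 by simp
  then have "(1/2)\<^sup>2 \<le> (1 - t)\<^sup>2" by (intro power_mono) auto
  then show "(1 - t)\<^sup>2 \<ge> 1/4" by (simp add: power2_eq_square)
  have key: "(1 - P) * Q = \<rho>\<^sup>2 * P * (1 - Q)" using PQ by (simp add: algebra_simps)
  have "sqrt (P * (1 - P) * Q * (1 - Q)) = (1 - P) * Q / \<rho>"
  proof (rule real_sqrt_unique)
    show "0 \<le> (1 - P) * Q / \<rho>" using P1 Q0 r0 by simp
    have "((1 - P) * Q / \<rho>)\<^sup>2 = ((1 - P) * Q) * ((1 - P) * Q) / \<rho>\<^sup>2"
      by (simp add: power2_eq_square)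
    also have "\<dots> = ((1 - P) * Q) * (\<rho>\<^sup>2 * P * (1 - Q)) / \<rho>\<^sup>2" by (subst (2) key) simp
    also have "\<dots> = P * (1 - P) * Q * (1 - Q)" using rr by (simp add: field_simps)
    finally show "((1 - P) * Q / \<rho>)\<^sup>2 = P * (1 - P) * Q * (1 - Q)" .
  qed
  then show "(1 - P) * Q / sqrt (P * (1 - P) * Q * (1 - Q)) = \<rho>"
    using P1 Q0 r0 by simp
qed

theorem theorem2:
  fixes F \<alpha> L0 W :: real
  assumes "0 \<le> F" "F < 1" "0 < \<alpha>" "\<alpha> \<le> 1" "0 < L0" "0 < W"
  shows "\<exists>(S :: real set) (d :: real \<Rightarrow> real \<Rightarrow> real) (s :: real \<Rightarrow> real)
            (P0 :: real measure) (Ppi :: real measure).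
           metric_on S d \<and> holder_on S d \<alpha> L0 s \<and>
           prob_space P0 \<and> prob_space Ppi \<and>
           space P0 = S \<and> sets Ppi = sets P0 \<and>
           s \<in> borel_measurable P0 \<and>
           (\<lambda>(x, y). d x y) \<in> borel_measurable (P0 \<Otimes>\<^sub>M P0) \<and>
           integrable P0 s \<and> integrable Ppi s \<and>
           metric_freedom P0 d \<alpha> s = F \<and>
           wasserstein1 d \<alpha> Ppi P0 = ennreal W \<and>
           lift Ppi P0 s \<ge> 1/2 * L0 * (1 - F) * W"
proof -
  define \<rho> where "\<rho> = 1 - F"
  have r0: "0 < \<rho>" and r1: "\<rho> \<le> 1" using assms by (auto simp: \<rho>_def)
  define t where "t = \<rho>\<^sup>2 / 16"
  define Q where "Q = 2 * t * (1 - t)"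
  define P where "P = Q / (Q + \<rho>\<^sup>2 * (1 - Q))"
  note pr = params[OF r0 r1, folded t_def, folded Q_def, folded P_def]
  have t0: "0 < t" and t1: "t < 1" and Q0: "0 < Q" and Q1: "Q < 1" and P0': "0 < P" and P1: "P < 1"
    and QP: "Q \<le> P" and k8: "P - Q \<le> 1/8" and t4: "(1 - t)\<^sup>2 \<ge> 1/4"
    and rho: "(1 - P) * Q / sqrt (P * (1 - P) * Q * (1 - Q)) = \<rho>" using pr by auto
  define r where "r = sqrt ((1 - t)\<^sup>2 - 2 * (P - Q))"
  have rad: "0 \<le> (1 - t)\<^sup>2 - 2 * (P - Q)"
  proof -
    define X where "X = (1 - t)\<^sup>2"
    have "0 \<le> X - 2 * (P - Q)" using k8 t4[folded X_def] by (simp add: field_simps)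
    then show ?thesis by (simp add: X_def)
  qed
  have r2: "r\<^sup>2 = (1 - t)\<^sup>2 - 2 * (P - Q)" unfolding r_def using rad by (rule real_sqrt_pow2)
  have rnn: "0 \<le> r" unfolding r_def using rad by (rule real_sqrt_ge_zero)
  have "r\<^sup>2 \<le> (1 - t)\<^sup>2" using r2 QP by simp
  then have rle: "r \<le> 1 - t" using rnn t1 by (simp add: power2_le_iff_abs_le) 
  define u where "u = ((1 - t) + r) / 2"
  define v where "v = ((1 - t) - r) / 2"
  have u0: "0 \<le> u" using rnn t1 by (simp add: u_def)
  have v0: "0 \<le> v" using rle by (simp add: v_def)
  have uv1: "u + v = 1 - t" by (simp add: u_def v_def field_simps)
  have uv2: "2 * u * v = P - Q"
  proof -
    have "2 * u * v = ((1 - t)\<^sup>2 - r\<^sup>2) / 2" by (simp add: u_def v_def power2_eq_square field_simps)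
    then show ?thesis using r2 by simp
  qed

  define S :: "real set" where "S = {0, 1, 2}"
  define w :: "real \<Rightarrow> real" where "w x = (if x = 0 then u else if x = 1 then v else t)" for x
  define \<delta> :: "real \<Rightarrow> real" where "\<delta> x = (if x = 2 then 1 else 0)" for x
  define h where "h = W / (1 - t)"
  have h0: "0 < h" using assms t1 by (simp add: h_def)
  define D where "D = h powr (1 / \<alpha>)"
  have D0: "0 < D" using h0 by (simp add: D_def)
  have hD: "D powr \<alpha> = h" using h0 assms by (simp add: D_def powr_powr)
  define c where "c = L0 * h"
  have c0: "0 < c" using h0 assms by (simp add: c_def)
  define d :: "real \<Rightarrow> real \<Rightarrow> real" where "d x y = (if x = y then 0 else D)" for x y
  define sc :: "real \<Rightarrow> real" where "sc x = (if x = 2 then c else 0)" for x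
  define P0 where "P0 = point_measure S (\<lambda>x. ennreal (w x))"
  define Ppi where "Ppi = point_measure S (\<lambda>x. ennreal (\<delta> x))"
  have finS: "finite S" by (simp add: S_def)
  have wnn: "\<And>x. 0 \<le> w x" using u0 v0 t0 by (simp add: w_def)
  have dnn: "\<And>x. 0 \<le> \<delta> x" by (simp add: \<delta>_def)
  have sumw: "(\<Sum>x\<in>S. w x) = 1" using uv1 by (simp add: S_def w_def)
  have sumd: "(\<Sum>x\<in>S. \<delta> x) = 1" by (simp add: S_def \<delta>_def)
  have probP0: "prob_space P0" unfolding P0_def by (rule prob_space_point_measure[OF finS]) (use wnn sumw in auto)
  have probPpi: "prob_space Ppi" unfolding Ppi_def by (rule prob_space_point_measure[OF finS]) (use dnn sumd in auto)
  have NN: "P0 \<Otimes>\<^sub>M P0 = point_measure (S \<times> S) (\<lambda>z. ennreal (w (fst z) * w (snd z)))"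
    unfolding P0_def by (rule pm_prod[OF finS finS wnn wnn])
  have metric: "metric_on S d"
    unfolding metric_on_def d_def using D0 by auto
  have holder: "holder_on S d \<alpha> L0 sc"
    unfolding holder_on_def d_def sc_def using hD c0 by (auto simp: c_def)
  have measd: "(\<lambda>(x, y). d x y) \<in> borel_measurable (P0 \<Otimes>\<^sub>M P0)" by (simp add: NN)
  have MF: "metric_freedom P0 d \<alpha> sc = F"
  proof -
    define q where "q z = w (fst z) * w (snd z)" for z
    define E :: "(real \<times> real) set" where "E = {z. fst z \<noteq> snd z}"
    define G :: "(real \<times> real) set" where "G = {z. (fst z = 2) \<noteq> (snd z = 2)}"
    have finA: "finite (S \<times> S)" using finS by simp
    have qnn: "\<And>z. 0 \<le> q z" using wnn by (simp add: q_def)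
    have sumq: "(\<Sum>z\<in>S \<times> S. q z) = 1"
      by (simp add: q_def sum.cartesian_product' sum_product[symmetric] sumw)
    have NN': "P0 \<Otimes>\<^sub>M P0 = point_measure (S \<times> S) (\<lambda>z. ennreal (q z))"
      by (simp add: NN q_def)
    have hE: "(\<lambda>(x, y). d x y powr \<alpha>) = (\<lambda>\<omega>. if \<omega> \<in> E then h else 0)"
      by (auto simp: fun_eq_iff d_def E_def hD)
    have hG: "(\<lambda>(x, y). \<bar>sc x - sc y\<bar>) = (\<lambda>\<omega>. if \<omega> \<in> G then c else 0)"
      using c0 by (auto simp: fun_eq_iff sc_def G_def)
    have PE: "(\<Sum>z\<in>S \<times> S \<inter> E. q z) = P"
    proof -
      have "(\<Sum>z\<in>S \<times> S \<inter> E. q z) = 2 * u * v + 2 * t * (u + v)"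
        by (simp add: sum.inter_restrict[OF finA] sum.cartesian_product' S_def q_def w_def E_def algebra_simps)
      also have "\<dots> = P" using uv1 uv2 by (simp add: Q_def)
      finally show ?thesis .
    qed
    have QG: "(\<Sum>z\<in>S \<times> S \<inter> G. q z) = Q"
    proof -
      have "(\<Sum>z\<in>S \<times> S \<inter> G. q z) = 2 * t * (u + v)"
        by (simp add: sum.inter_restrict[OF finA] sum.cartesian_product' S_def q_def w_def G_def algebra_simps)
      also have "\<dots> = Q" using uv1 by (simp add: Q_def)
      finally show ?thesis .
    qed
    have m1: "(\<lambda>\<omega>. midrank (point_measure (S \<times> S) (\<lambda>z. ennreal (q z))) (\<lambda>\<omega>. if \<omega> \<in> E then h else 0) (if \<omega> \<in> E then h else 0))
       = (\<lambda>\<omega>. if \<omega> \<in> E then 1 - P/2 else (1 - P)/2)"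
      by (rule ext, subst midrank_bin[OF finA qnn sumq h0]) (simp add: PE)
    have m2: "(\<lambda>\<omega>. midrank (point_measure (S \<times> S) (\<lambda>z. ennreal (q z))) (\<lambda>\<omega>. if \<omega> \<in> G then c else 0) (if \<omega> \<in> G then c else 0))
       = (\<lambda>\<omega>. if \<omega> \<in> G then 1 - Q/2 else (1 - Q)/2)"
      by (rule ext, subst midrank_bin[OF finA qnn sumq c0]) (simp add: QG)
    have GE: "S \<times> S \<inter> G \<subseteq> E" by (auto simp: G_def E_def)
    have "spearman (P0 \<Otimes>\<^sub>M P0) (\<lambda>(x, y). d x y powr \<alpha>) (\<lambda>(x, y). \<bar>sc x - sc y\<bar>) = \<rho>"
      unfolding spearman_def NN' hE hG m1 m2
      using pearson_bin[OF finA qnn sumq GE PE[symmetric] QG[symmetric]] rho by simp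
    then show ?thesis unfolding metric_freedom_def \<rho>_def by simp
  qed
  have WW: "wasserstein1 d \<alpha> Ppi P0 = ennreal W"
  proof -
    have PP: "Ppi \<Otimes>\<^sub>M P0 = point_measure (S \<times> S) (\<lambda>z. ennreal (\<delta> (fst z) * w (snd z)))"
      unfolding Ppi_def P0_def by (rule pm_prod[OF finS finS dnn wnn])
    have sPP: "sets (Ppi \<Otimes>\<^sub>M P0) = Pow (S \<times> S)" unfolding PP by (rule sets_point_measure)
    have spPP: "space (Ppi \<Otimes>\<^sub>M P0) = S \<times> S" unfolding PP by (rule space_point_measure)
    have val: "(\<integral>\<^sup>+ z. ennreal (d (fst z) (snd z) powr \<alpha>) \<partial>C) = ennreal W" if C: "C \<in> couplings Ppi P0" for C
    proof -
      from C have sC: "sets C = sets (Ppi \<Otimes>\<^sub>M P0)" and pC: "prob_space C"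
        and mg1: "distr C Ppi fst = Ppi" and mg2: "distr C P0 snd = P0" by (auto simp: couplings_def)
      interpret C: prob_space C by fact
      have spC: "space C = S \<times> S" using sets_eq_imp_space_eq[OF sC] spPP by simp
      have sC': "sets C = Pow (S \<times> S)" using sC sPP by simp
      have mf: "fst \<in> measurable C Ppi" unfolding Ppi_def using finS
        by (auto simp: spC sC')
      have ms: "snd \<in> measurable C P0" unfolding P0_def using finS
        by (auto simp: spC sC')
      define Y where "Y = {z \<in> S \<times> S. fst z \<noteq> 2}"
      define X where "X = {z \<in> S \<times> S. snd z \<noteq> 2}"
      define E' where "E' = {z \<in> S \<times> S. fst z \<noteq> snd z}"
      have S2: "S - {2} = {0, 1}" by (auto simp: S_def)
      have Ysets: "Y \<in> sets C" "X \<in> sets C" "E' \<in> sets C" by (auto simp: sC' Y_def X_def E'_def)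
      have "emeasure C Y = emeasure (distr C Ppi fst) (S - {2})"
        by (subst emeasure_distr[OF mf]) (auto simp: Ppi_def sets_point_measure spC Y_def intro!: arg_cong[where f="emeasure C"])
      also have "\<dots> = emeasure Ppi (S - {2})" by (simp add: mg1)
      also have "\<dots> = 0" unfolding Ppi_def
        by (subst emeasure_point_measure_finite[OF finS]) (auto simp: S_def \<delta>_def)
      finally have mY: "measure C Y = 0" by (simp add: C.emeasure_eq_measure)
      have "emeasure C X = emeasure (distr C P0 snd) (S - {2})"
        by (subst emeasure_distr[OF ms]) (auto simp: P0_def sets_point_measure spC X_def intro!: arg_cong[where f="emeasure C"])
      also have "\<dots> = emeasure P0 (S - {2})" by (simp add: mg2)
      also have "\<dots> = ennreal (1 - t)" unfolding P0_def
        using u0 v0 uv1 S2 by (subst emeasure_point_measure_finite[OF finS]) (auto simp: w_def ennreal_plus[symmetric])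
      finally have mX: "measure C X = 1 - t" using t1 by (simp add: C.emeasure_eq_measure)
      have "measure C E' \<le> measure C (X \<union> Y)"
        using Ysets by (intro C.finite_measure_mono) (auto simp: E'_def X_def Y_def)
      also have "\<dots> \<le> measure C X + measure C Y" using Ysets by (intro measure_Un_le) auto
      finally have le1: "measure C E' \<le> 1 - t" using mX mY by simp
      have "measure C X \<le> measure C (E' \<union> Y)"
        using Ysets by (intro C.finite_measure_mono) (auto simp: E'_def X_def Y_def)
      also have "\<dots> \<le> measure C E' + measure C Y" using Ysets by (intro measure_Un_le) auto
      finally have le2: "1 - t \<le> measure C E'" using mX mY by simp
      have mE: "emeasure C E' = ennreal (1 - t)"
        using le1 le2 by (simp add: C.emeasure_eq_measure)
      have "(\<integral>\<^sup>+ z. ennreal (d (fst z) (snd z) powr \<alpha>) \<partial>C) = (\<integral>\<^sup>+ z. ennreal h * indicator E' z \<partial>C)"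
        by (rule nn_integral_cong) (auto simp: spC d_def hD E'_def)
      also have "\<dots> = ennreal h * emeasure C E'" using Ysets by (simp add: nn_integral_cmult_indicator)
      also have "\<dots> = ennreal (h * (1 - t))" using mE h0 t1 by (simp add: ennreal_mult)
      also have "h * (1 - t) = W" using t1 by (simp add: h_def)
      finally show ?thesis .
    qed
    have ne: "Ppi \<Otimes>\<^sub>M P0 \<in> couplings Ppi P0"
    proof -
      have sf: "sigma_finite_measure P0" using probP0 by (rule prob_space_imp_sigma_finite)
      have d1: "distr (Ppi \<Otimes>\<^sub>M P0) Ppi fst = Ppi" by (rule prob_space.distr_pair_fst[OF probP0])
      have d2: "distr (Ppi \<Otimes>\<^sub>M P0) P0 snd = P0"
      proof (rule measure_eqI)
        show "sets (distr (Ppi \<Otimes>\<^sub>M P0) P0 snd) = sets P0" by simp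
        fix A assume "A \<in> sets (distr (Ppi \<Otimes>\<^sub>M P0) P0 snd)"
        then have A: "A \<in> sets P0" by simp
        then have AS: "A \<subseteq> S" by (simp add: P0_def sets_point_measure)
        have "emeasure (distr (Ppi \<Otimes>\<^sub>M P0) P0 snd) A = emeasure (Ppi \<Otimes>\<^sub>M P0) (snd -` A \<inter> space (Ppi \<Otimes>\<^sub>M P0))"
          using A by (simp add: emeasure_distr)
        also have "snd -` A \<inter> space (Ppi \<Otimes>\<^sub>M P0) = S \<times> A" using AS by (auto simp: spPP)
        also have "emeasure (Ppi \<Otimes>\<^sub>M P0) (S \<times> A) = emeasure Ppi S * emeasure P0 A"
          using A by (intro sigma_finite_measure.emeasure_pair_measure_Times[OF sf]) (auto simp: Ppi_def sets_point_measure)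
        also have "emeasure Ppi S = 1" using prob_space.emeasure_space_1[OF probPpi] by (simp add: Ppi_def space_point_measure)
        finally show "emeasure (distr (Ppi \<Otimes>\<^sub>M P0) P0 snd) A = emeasure P0 A" by simp
      qed
      show ?thesis unfolding couplings_def using prob_space_pair[OF probPpi probP0] d1 d2 by simp
    qed
    have "wasserstein1 d \<alpha> Ppi P0 = (INF C\<in>couplings Ppi P0. ennreal W)"
      unfolding wasserstein1_def by (rule INF_cong) (simp_all add: val)
    also have "\<dots> = ennreal W" using ne by (intro INF_const) auto
    finally show ?thesis .
  qed
  have LL: "lift Ppi P0 sc \<ge> 1/2 * L0 * (1 - F) * W"
  proof -
    have I0: "integral\<^sup>L P0 sc = t * c" unfolding P0_def
      by (subst lebesgue_integral_point_measure_finite[OF finS]) (use u0 v0 t0 in \<open>auto simp: S_def w_def sc_def\<close>)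
    have I1: "integral\<^sup>L Ppi sc = c" unfolding Ppi_def
      by (subst lebesgue_integral_point_measure_finite[OF finS]) (auto simp: S_def \<delta>_def sc_def)
    have "lift Ppi P0 sc = L0 * (h * (1 - t))" unfolding lift_def I0 I1 c_def by (simp add: algebra_simps)
    also have "h * (1 - t) = W" using t1 by (simp add: h_def)
    finally have l: "lift Ppi P0 sc = L0 * W" .
    have "0 < L0 * W" using assms by simp
    moreover have "1 - F \<le> 2" using assms by simp
    ultimately have "(1 - F) * (L0 * W) \<le> 2 * (L0 * W)" by (intro mult_right_mono) auto
    then show ?thesis unfolding l by (simp add: algebra_simps)
  qed
  show ?thesis
    apply (rule exI[of _ S], rule exI[of _ d], rule exI[of _ sc], rule exI[of _ P0], rule exI[of _ Ppi])
    using metric holder probP0 probPpi MF WW LL finS measd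
    by (auto simp: P0_def Ppi_def space_point_measure sets_point_measure
        intro!: integrable_point_measure_finite)
qed

end
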